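(* Consider the planar SLAM system $$\dot x = u\,R_\theta e_1,\qquad \dot\theta = u v,\qquad \dot p_i = 0\quad (1\le i\le N),$$ with measurements $z_i = R_{-\theta}(p_i - x)$. For an estimate $(\hat x,\hat\theta,\hat p_1,\dots,\hat p_N)$ let $\hat z_i = R_{-\hat\theta}(\hat p_i-\hat x)$ and let $E = (E_1,\dots,E_N)$ with $E_i = R_{\hat\theta}(\hat z_i - z_i)\in\mathbb R^2$. Let $\mathcal L_\theta:\mathbb R^{2N}\to\mathbb R$ and $\mathcal L_x,\mathcal L_1,\dots,\mathcal L_N:\mathbb R^{2N}\to\mathbb R^2$ be smooth maps vanishing at $0$, and consider the observer $$\dot{\hat\theta} = uv + \mathcal L_\theta(E),\qquad \dot{\hat x} = u R_{\hat\theta}e_1 + \mathcal L_\theta(E)\, e_3\wedge \hat x + \mathcal L_x(E),\qquad \dot{\hat p}_i = \mathcal L_\theta(E)\, e_3\wedge\hat p_i + \mathcal L_i(E).$$ Define the invariant state error $\eta = (\tilde\theta,\tilde x,\tilde p_1,\dots,\tilde p_N)$ by $$\tilde\theta = \hat\theta-\theta,\qquad \tilde x = \hat x - R_{\tilde\theta}x,\qquad \tilde p_i = \hat p_i - R_{\tilde\theta}p_i.$$ Then $E_i = \tilde p_i - \tilde x$ for each $i$, and $\eta$ satisfies the autonomous differential equation $$\dot{\tilde\theta} = \mathcal L_\theta(E),\qquad \dot{\tilde x} = \mathcal L_\theta(E)\,e_3\wedge\tilde x + \mathcal L_x(E),\qquad \dot{\tilde p}_i = \mathcal L_\theta(E)\,e_3\wedge\tilde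 p_i + \mathcal L_i(E),$$ which depends only on $\eta$ (and not on the trajectory, nor on $u(t),v(t)$). In particular, its linearization at $\eta=0$ is the time-invariant linear system $\frac{d}{dt}\delta\eta = LC\,\delta\eta$, where $C$ is the fixed linear map $\delta\eta=(\delta\theta,\delta x,\delta p_1,\dots,\delta p_N)\mapsto(\delta p_1-\delta x,\dots,\delta p_N-\delta x)$ and $L$ is the differential at $0$ of $(\mathcal L_\theta,\mathcal L_x,\mathcal L_1,\dots,\mathcal L_N)$, which can be chosen freely.
   Context: The state is $(x,\theta,p_1,\dots,p_N)$ with $x\in\mathbb R^2$ the vehicle position, $\theta\in\mathbb R$ its heading and $p_i\in\mathbb R^2$ the fixed landmark positions in a common reference frame; $u(t),v(t)\in\mathbb R$ are known scalar inputs. $e_1=(1,0)^T$, $R_\theta$ is the $2\times2$ rotation matrix of angle $\theta$. For a planar vector $w=(a,b)^T$, $e_3\wedge w$ denotes the planar vector $(-b,a)^T$ (cross product with the vertical unit vector $e_3$, restricted to the plane). *)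

theory Defs
  imports "HOL-Analysis.Analysis"
begin

definition rot :: "real \<Rightarrow> real^2 \<Rightarrow> real^2" where
  "rot a w = vector [cos a * w$1 - sin a * w$2, sin a * w$1 + cos a * w$2]"

definition e1 :: "real^2" where
  "e1 = vector [1, 0]"

definition e3wedge :: "real^2 \<Rightarrow> real^2" where
  "e3wedge w = vector [- (w$2), w$1]"

definition meas :: "real \<Rightarrow> real^2 \<Rightarrow> real^2 \<Rightarrow> real^2" where
  "meas th x p = rot (- th) (p - x)"

definition innov :: "real \<Rightarrow> real^2 \<Rightarrow> (real^2)^'n \<Rightarrow> real \<Rightarrow> real^2 \<Rightarrow> (real^2)^'n \<Rightarrow> (real^2)^'n" where
  "innov thh xh ph th x p = (\<chi> i. rot thh (meas thh xh (ph$i) - meas th x (p$i)))"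

definition outC :: "real \<times> (real^2) \<times> ((real^2)^'n) \<Rightarrow> (real^2)^'n" where
  "outC eta = (\<chi> i. (snd (snd eta))$i - fst (snd eta))"

definition err_field ::
  "((real^2)^'n \<Rightarrow> real) \<Rightarrow> ((real^2)^'n \<Rightarrow> real^2) \<Rightarrow> ('n \<Rightarrow> (real^2)^'n \<Rightarrow> real^2)
   \<Rightarrow> real \<times> (real^2) \<times> ((real^2)^'n) \<Rightarrow> real \<times> (real^2) \<times> ((real^2)^'n)" where
  "err_field Lth Lx Lp eta =
     (let E = outC eta; xt = fst (snd eta); pt = snd (snd eta) in
       (Lth E, Lth E *\<^sub>R e3wedge xt + Lx E, \<chi> i. Lth E *\<^sub>R e3wedge (pt$i) + Lp i E))"

definition gain_map ::
  "((real^2)^'n \<Rightarrow> real) \<Rightarrow> ((real^2)^'n \<Rightarrow> real^2) \<Rightarrow> ('n \<Rightarrow> (real^2)^'n \<Rightarrow> real^2)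
   \<Rightarrow> (real^2)^'n \<Rightarrow> real \<times> (real^2) \<times> ((real^2)^'n)" where
  "gain_map Lth Lx Lp E = (Lth E, Lx E, \<chi> i. Lp i E)"

end

theory Submission imports Defs begin

lemma vec2_eqI: "(a::real^2)$1 = b$1 \<Longrightarrow> a$2 = b$2 \<Longrightarrow> a = b"
  by (simp add: vec_eq_iff forall_2)

lemma rot_rot: "rot a (rot b w) = rot (a+b) w"
  by (rule vec2_eqI) (simp_all add: rot_def cos_add sin_add algebra_simps)

lemma rot_alt: "rot a w = cos a *\<^sub>R w + sin a *\<^sub>R e3wedge w"
  by (rule vec2_eqI) (simp_all add: rot_def e3wedge_def algebra_simps)

lemma e3wedge_rot: "e3wedge (rot a w) = rot a (e3wedge w)"
  by (rule vec2_eqI) (simp_all add: rot_def e3wedge_def algebra_simps)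

lemma e3wedge_e3wedge: "e3wedge (e3wedge w) = - w"
  by (rule vec2_eqI) (simp_all add: e3wedge_def)

lemma bl_e3wedge: "bounded_linear e3wedge"
proof -
  have "linear e3wedge"
    by (rule linearI; rule vec2_eqI) (simp_all add: e3wedge_def)
  then show ?thesis by (simp add: linear_conv_bounded_linear)
qed

lemma rot_lin: "rot a (b - c) = rot a b - rot a c" "rot a (b + c) = rot a b + rot a c"
  "rot a (k *\<^sub>R b) = k *\<^sub>R rot a b"
  by (rule vec2_eqI; simp add: rot_def algebra_simps)+

lemma e3w_lin: "e3wedge (b - c) = e3wedge b - e3wedge c" "e3wedge (b + c) = e3wedge b + e3wedge c"
  "e3wedge (k *\<^sub>R b) = k *\<^sub>R e3wedge b" "e3wedge 0 = 0"
  by (rule vec2_eqI; simp add: e3wedge_def algebra_simps)+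

lemma rot_deriv:
  assumes "(a has_real_derivative a') (at t)" "(w has_vector_derivative w') (at t)"
  shows "((\<lambda>t. rot (a t) (w t)) has_vector_derivative
           (rot (a t) w' + a' *\<^sub>R e3wedge (rot (a t) (w t)))) (at t)"
proof -
  have ew: "((\<lambda>t. e3wedge (w t)) has_vector_derivative e3wedge w') (at t)"
    by (rule bounded_linear.has_vector_derivative[OF bl_e3wedge assms(2)])
  have "((\<lambda>t. cos (a t) *\<^sub>R w t + sin (a t) *\<^sub>R e3wedge (w t)) has_vector_derivative
     (cos (a t) *\<^sub>R w' + (- sin (a t) * a') *\<^sub>R w t + (sin (a t) *\<^sub>R e3wedge w' + (cos (a t) * a') *\<^sub>R e3wedge (w t)))) (at t)"
    apply (intro has_vector_derivative_add has_vector_derivative_scaleR assms ew)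
    using assms(1) by (auto intro!: derivative_eq_intros simp: algebra_simps)
  moreover have eq: "cos (a t) *\<^sub>R w' + (- sin (a t) * a') *\<^sub>R w t + (sin (a t) *\<^sub>R e3wedge w' + (cos (a t) * a') *\<^sub>R e3wedge (w t))
     = rot (a t) w' + a' *\<^sub>R e3wedge (rot (a t) (w t))"
    by (simp add: rot_alt e3w_lin e3wedge_e3wedge algebra_simps)
  ultimately have X: "((\<lambda>t. cos (a t) *\<^sub>R w t + sin (a t) *\<^sub>R e3wedge (w t)) has_vector_derivative
     (rot (a t) w' + a' *\<^sub>R e3wedge (rot (a t) (w t)))) (at t)" by metis
  have fe: "(\<lambda>t. rot (a t) (w t)) = (\<lambda>t. cos (a t) *\<^sub>R w t + sin (a t) *\<^sub>R e3wedge (w t))"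
    by (simp add: rot_alt)
  show ?thesis unfolding fe by (rule X)
qed

lemma hd_vec:
  fixes f :: "'a::real_normed_vector \<Rightarrow> 'b::real_normed_vector^'n"
  assumes d: "\<And>i. ((\<lambda>x. f x $ i) has_derivative (\<lambda>h. f' h $ i)) (at x within s)"
  shows "(f has_derivative f') (at x within s)"
proof -
  have bl: "\<And>i. bounded_linear (\<lambda>h. f' h $ i)" using d has_derivative_bounded_linear by blast
  have lin: "linear f'"
    by (rule linearI; simp add: vec_eq_iff linear_add[OF bounded_linear.linear[OF bl]]
          linear_scale[OF bounded_linear.linear[OF bl]])
  obtain KK where KK: "\<And>h. norm (f' h) \<le> norm h * KK"
  proof -
    obtain K where K: "\<And>i h. norm (f' h $ i) \<le> norm h * K i"
      using bounded_linear.bounded[OF bl] by metis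
    have "norm (f' h) \<le> norm h * (\<Sum>i\<in>UNIV. K i)" for h
    proof -
      have "norm (f' h) \<le> (\<Sum>i\<in>UNIV. norm (f' h $ i))" unfolding norm_vec_def by (rule L2_set_le_sum) (rule norm_ge_zero)
      also have "\<dots> \<le> (\<Sum>i\<in>UNIV. norm h * K i)" by (rule sum_mono) (rule K)
      finally show ?thesis by (simp add: sum_distrib_left)
    qed
    then show ?thesis using that by blast
  qed
  have blf: "bounded_linear f'"
    by (rule bounded_linear_intro[of f' KK]) (auto simp: linear_add[OF lin] linear_scale[OF lin] KK)
  show ?thesis
    unfolding has_derivative_at_within
  proof (intro conjI blf vec_tendstoI)
    fix i
    have "((\<lambda>y. ((f y $ i - f x $ i) - f' (y - x) $ i) /\<^sub>R norm (y - x)) \<longlongrightarrow> 0) (at x within s)"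
      using d[of i] unfolding has_derivative_at_within by blast
    then show "((\<lambda>y. ((f y - f x - f' (y - x)) /\<^sub>R norm (y - x)) $ i) \<longlongrightarrow> 0 $ i) (at x within s)"
      by simp
  qed
qed

lemma hvd_vec:
  fixes f :: "real \<Rightarrow> 'b::real_normed_vector^'n"
  assumes d: "\<And>i. ((\<lambda>x. f x $ i) has_vector_derivative (f' $ i)) (at x)"
  shows "(f has_vector_derivative f') (at x)"
  using d unfolding has_vector_derivative_def by (intro hd_vec) simp


lemma rot0: "rot 0 w = w"
  by (rule vec2_eqI) (simp_all add: rot_def)

lemma bl_outC: "bounded_linear (outC :: real \<times> (real^2) \<times> ((real^2)^'n) \<Rightarrow> (real^2)^'n)"
proof -
  have "linear (outC :: real \<times> (real^2) \<times> ((real^2)^'n) \<Rightarrow> (real^2)^'n)"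
    by (rule linearI) (simp_all add: outC_def vec_eq_iff algebra_simps)
  then show ?thesis by (simp add: linear_conv_bounded_linear)
qed

theorem mainTheorem2:
  fixes x xh :: "real \<Rightarrow> real^2" and th thh u v :: "real \<Rightarrow> real"
    and p :: "(real^2)^'n" and ph :: "real \<Rightarrow> (real^2)^'n"
    and Lth :: "(real^2)^'n \<Rightarrow> real" and Lx :: "(real^2)^'n \<Rightarrow> real^2"
    and Lp :: "'n \<Rightarrow> (real^2)^'n \<Rightarrow> real^2"
  assumes Lth_diff: "\<And>E. Lth differentiable (at E)"
    and Lx_diff: "\<And>E. Lx differentiable (at E)"
    and Lp_diff: "\<And>i E. Lp i differentiable (at E)"
    and Lth0: "Lth 0 = 0" and Lx0: "Lx 0 = 0" and Lp0: "\<And>i. Lp i 0 = 0"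
    and sys_x: "\<And>t. (x has_vector_derivative (u t *\<^sub>R rot (th t) e1)) (at t)"
    and sys_th: "\<And>t. (th has_vector_derivative (u t * v t)) (at t)"
    and obs_th: "\<And>t. (thh has_vector_derivative
                    (u t * v t + Lth (innov (thh t) (xh t) (ph t) (th t) (x t) p))) (at t)"
    and obs_x: "\<And>t. (xh has_vector_derivative
                    (u t *\<^sub>R rot (thh t) e1
                     + Lth (innov (thh t) (xh t) (ph t) (th t) (x t) p) *\<^sub>R e3wedge (xh t)
                     + Lx (innov (thh t) (xh t) (ph t) (th t) (x t) p))) (at t)"
    and obs_p: "\<And>t. (ph has_vector_derivative
                    (\<chi> i. Lth (innov (thh t) (xh t) (ph t) (th t) (x t) p) *\<^sub>R e3wedge (ph t $ i)
                          + Lp i (innov (thh t) (xh t) (ph t) (th t) (x t) p))) (at t)"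
  defines "eta \<equiv> (\<lambda>t. (thh t - th t,
                         xh t - rot (thh t - th t) (x t),
                         \<chi> i. ph t $ i - rot (thh t - th t) (p $ i)))"
  shows "(\<forall>t i. innov (thh t) (xh t) (ph t) (th t) (x t) p $ i
                  = snd (snd (eta t)) $ i - fst (snd (eta t)))
       \<and> (\<forall>t. (eta has_vector_derivative err_field Lth Lx Lp (eta t)) (at t))
       \<and> err_field Lth Lx Lp 0 = 0
       \<and> (\<forall>L. (gain_map Lth Lx Lp has_derivative L) (at 0) \<longrightarrow>
              (err_field Lth Lx Lp has_derivative (\<lambda>d. L (outC d))) (at 0))"
proof -
  define E where "E t = innov (thh t) (xh t) (ph t) (th t) (x t) p" for t
  have P1: "\<forall>t i. innov (thh t) (xh t) (ph t) (th t) (x t) p $ i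
                  = snd (snd (eta t)) $ i - fst (snd (eta t))"
    by (simp add: innov_def meas_def rot_lin rot_rot rot0 eta_def algebra_simps)
  have Eeq: "E t = outC (eta t)" for t
    using P1 by (simp add: E_def outC_def vec_eq_iff)
  have P2: "(eta has_vector_derivative err_field Lth Lx Lp (eta t)) (at t)" for t
  proof -
    have dth: "((\<lambda>t. thh t - th t) has_real_derivative Lth (E t)) (at t)"
      using has_vector_derivative_diff[OF obs_th[of t] sys_th[of t]]
      by (simp add: E_def has_real_derivative_iff_has_vector_derivative)
    have d1: "((\<lambda>t. thh t - th t) has_vector_derivative Lth (E t)) (at t)"
      using dth by (simp add: has_real_derivative_iff_has_vector_derivative)
    have d2: "((\<lambda>t. xh t - rot (thh t - th t) (x t)) has_vector_derivative
         Lth (E t) *\<^sub>R e3wedge (xh t - rot (thh t - th t) (x t)) + Lx (E t)) (at t)"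
    proof -
      have "((\<lambda>t. xh t - rot (thh t - th t) (x t)) has_vector_derivative
         (u t *\<^sub>R rot (thh t) e1 + Lth (E t) *\<^sub>R e3wedge (xh t) + Lx (E t))
         - (rot (thh t - th t) (u t *\<^sub>R rot (th t) e1) + Lth (E t) *\<^sub>R e3wedge (rot (thh t - th t) (x t)))) (at t)"
        using has_vector_derivative_diff[OF obs_x[of t] rot_deriv[OF dth sys_x[of t]]]
        by (simp add: E_def)
      moreover have "(u t *\<^sub>R rot (thh t) e1 + Lth (E t) *\<^sub>R e3wedge (xh t) + Lx (E t))
         - (rot (thh t - th t) (u t *\<^sub>R rot (th t) e1) + Lth (E t) *\<^sub>R e3wedge (rot (thh t - th t) (x t)))
         = Lth (E t) *\<^sub>R e3wedge (xh t - rot (thh t - th t) (x t)) + Lx (E t)"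
        by (simp add: rot_lin rot_rot e3w_lin algebra_simps)
      ultimately show ?thesis by simp
    qed
    have d3: "((\<lambda>t. \<chi> i. ph t $ i - rot (thh t - th t) (p $ i)) has_vector_derivative
         (\<chi> i. Lth (E t) *\<^sub>R e3wedge (ph t $ i - rot (thh t - th t) (p $ i)) + Lp i (E t))) (at t)"
    proof (rule hvd_vec)
      fix i
      have pi: "((\<lambda>t. ph t $ i) has_vector_derivative
         (Lth (E t) *\<^sub>R e3wedge (ph t $ i) + Lp i (E t))) (at t)"
        using bounded_linear.has_vector_derivative[OF bounded_linear_vec_nth obs_p[of t], of i]
        by (simp add: E_def)
      have c: "((\<lambda>t. p $ i) has_vector_derivative 0) (at t)"
        by (rule has_vector_derivative_const)
      have "((\<lambda>t. ph t $ i - rot (thh t - th t) (p $ i)) has_vector_derivative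
         (Lth (E t) *\<^sub>R e3wedge (ph t $ i) + Lp i (E t))
         - (rot (thh t - th t) 0 + Lth (E t) *\<^sub>R e3wedge (rot (thh t - th t) (p $ i)))) (at t)"
        by (rule has_vector_derivative_diff[OF pi rot_deriv[OF dth c]])
      moreover have "rot (thh t - th t) 0 = 0" by (rule vec2_eqI) (simp_all add: rot_def)
      ultimately show "((\<lambda>t. (\<chi> i. ph t $ i - rot (thh t - th t) (p $ i)) $ i) has_vector_derivative
         (\<chi> i. Lth (E t) *\<^sub>R e3wedge (ph t $ i - rot (thh t - th t) (p $ i)) + Lp i (E t)) $ i) (at t)"
        by (simp add: e3w_lin algebra_simps)
    qed
    have "(eta has_vector_derivative (Lth (E t),
         Lth (E t) *\<^sub>R e3wedge (xh t - rot (thh t - th t) (x t)) + Lx (E t),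
         \<chi> i. Lth (E t) *\<^sub>R e3wedge (ph t $ i - rot (thh t - th t) (p $ i)) + Lp i (E t))) (at t)"
      unfolding eta_def by (intro has_vector_derivative_Pair d1 d2 d3)
    then show ?thesis
      by (simp add: err_field_def Eeq[of t] Let_def) (simp add: eta_def)
  qed
  have P3: "err_field Lth Lx Lp 0 = 0"
  proof -
    have o0: "outC (0 :: real \<times> (real^2) \<times> ((real^2)^'n)) = 0"
      by (simp add: outC_def vec_eq_iff zero_prod_def)
    show ?thesis
      by (simp add: err_field_def Let_def o0 Lth0 Lx0 Lp0 e3w_lin) (simp add: zero_prod_def zero_vec_def)
  qed
  have P4: "(err_field Lth Lx Lp has_derivative (\<lambda>d. L (outC d))) (at 0)"
    if hL: "(gain_map Lth Lx Lp has_derivative L) (at 0)" for L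
  proof -
    have o0: "outC (0 :: real \<times> (real^2) \<times> ((real^2)^'n)) = 0"
      by (simp add: outC_def vec_eq_iff zero_prod_def)
    have dO: "(outC has_derivative outC) (at (0 :: real \<times> (real^2) \<times> ((real^2)^'n)))"
      by (rule bounded_linear_imp_has_derivative[OF bl_outC])
    have gth: "(Lth has_derivative (\<lambda>h. fst (L h))) (at 0)"
      using has_derivative_fst[OF hL] by (simp add: gain_map_def)
    have gx: "(Lx has_derivative (\<lambda>h. fst (snd (L h)))) (at 0)"
      using has_derivative_fst[OF has_derivative_snd[OF hL]] by (simp add: gain_map_def)
    have gp: "(Lp i has_derivative (\<lambda>h. snd (snd (L h)) $ i)) (at 0)" for i
      using bounded_linear.has_derivative[OF bounded_linear_vec_nth has_derivative_snd[OF has_derivative_snd[OF hL]], of i]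
      by (simp add: gain_map_def)
    have cth: "((\<lambda>d. Lth (outC d)) has_derivative (\<lambda>d. fst (L (outC d)))) (at 0)"
      using diff_chain_at[OF dO, of Lth] gth o0 by (simp add: o_def)
    have cx: "((\<lambda>d. Lx (outC d)) has_derivative (\<lambda>d. fst (snd (L (outC d))))) (at 0)"
      using diff_chain_at[OF dO, of Lx] gx o0 by (simp add: o_def)
    have cp: "((\<lambda>d. Lp i (outC d)) has_derivative (\<lambda>d. snd (snd (L (outC d))) $ i)) (at 0)" for i
      using diff_chain_at[OF dO, of "Lp i"] gp[of i] o0 by (simp add: o_def)
    have ew: "((\<lambda>d. e3wedge (fst (snd d))) has_derivative (\<lambda>d. e3wedge (fst (snd d)))) (at (0 :: real \<times> (real^2) \<times> ((real^2)^'n)))"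
      by (intro bounded_linear.has_derivative[OF bl_e3wedge] has_derivative_fst has_derivative_snd has_derivative_ident)
    have ewp: "((\<lambda>d. e3wedge (snd (snd d) $ i)) has_derivative (\<lambda>d. e3wedge (snd (snd d) $ i))) (at (0 :: real \<times> (real^2) \<times> ((real^2)^'n)))" for i
      by (intro bounded_linear.has_derivative[OF bl_e3wedge] bounded_linear.has_derivative[OF bounded_linear_vec_nth] has_derivative_snd has_derivative_ident)
    have Lo: "Lth (outC (0 :: real \<times> (real^2) \<times> ((real^2)^'n))) = 0" using o0 Lth0 by simp
    have D2: "((\<lambda>d. Lth (outC d) *\<^sub>R e3wedge (fst (snd d)) + Lx (outC d)) has_derivative
                (\<lambda>d. fst (snd (L (outC d))))) (at 0)"
      using has_derivative_add[OF has_derivative_scaleR[OF cth ew] cx]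
      by (simp add: Lo e3w_lin)
    have D3: "((\<lambda>d. \<chi> i. Lth (outC d) *\<^sub>R e3wedge (snd (snd d) $ i) + Lp i (outC d)) has_derivative
                (\<lambda>d. snd (snd (L (outC d))))) (at 0)"
    proof (rule hd_vec)
      fix i
      show "((\<lambda>d. (\<chi> i. Lth (outC d) *\<^sub>R e3wedge (snd (snd d) $ i) + Lp i (outC d)) $ i) has_derivative
                (\<lambda>d. snd (snd (L (outC d))) $ i)) (at 0)"
        using has_derivative_add[OF has_derivative_scaleR[OF cth ewp[of i]] cp[of i]]
        by (simp add: Lo e3w_lin)
    qed
    have "(err_field Lth Lx Lp has_derivative
           (\<lambda>d. (fst (L (outC d)), fst (snd (L (outC d))), snd (snd (L (outC d)))))) (at 0)"
      unfolding err_field_def Let_def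
      by (intro has_derivative_Pair cth D2 D3)
    then show ?thesis by simp
  qed
  show ?thesis using P1 P2 P3 P4 by blast
qed

end
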